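(* Let $\mathcal{Z}$ be a data space and $\ell:\mathbb{R}^d\times\mathcal{Z}\to\mathbb{R}$ a loss, differentiable in $w$, which is $L$-Lipschitz in $w$ ($|\ell(w,z)-\ell(w',z)|\le L\|w-w'\|$) and gradient Lipschitz: $\|\nabla\ell(w,z)-\nabla\ell(w',z)\|\le G\|w-w'\|$ for all $w,w'\in\mathbb{R}^d$, $z\in\mathcal{Z}$, with $G<\infty$. Fix $T\in\mathbb{N}$ and $R>0$. Given $S=(z_1,\dots,z_n)\in\mathcal{Z}^n$ and an initial point $w_0$, consider projected SGD $$w_{k+1}=\Pi_R\big[w_k-\eta_k\nabla\ell(w_k,z_{i_{k+1}})\big],$$ where $i_1,i_2,\dots$ are independent indices drawn uniformly from $\{1,\dots,n\}$ (this is the algorithmic randomness $U$), $\Pi_R$ is the Euclidean projection onto the ball of radius $R$ centred at $0$, and the step sizes satisfy $\eta_k\le c/k$ for some $c<1/G$. Then the algorithm returning the trajectory $\mathcal{W}_{S,U}=\{w_1,\dots,w_T\}$ is trajectory-stable with stability parameter $$\beta_n=\frac{4LR}{n-1}\Big(\frac{L}{GR}\Big)^{\frac1{Gc+1}}\sum_{k=1}^T k^{\frac{Gc}{Gc+1}}.$$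
   Context: A data-dependent selection of $\mathcal{W}_{S,U}$ is a deterministic map $\omega:\mathrm{CL}(\mathbb{R}^d)\times\mathcal{Z}^n\to\mathbb{R}^d$ ($\mathrm{CL}(\mathbb{R}^d)$ = closed subsets of $\mathbb{R}^d$) with $\omega(\mathcal{W}_{S,U},S)\in\mathcal{W}_{S,U}$ almost surely w.r.t. the joint law of $(S,\mathcal{W}_{S,U})$. Trajectory stability: the set-valued algorithm $S,U\mapsto\mathcal{W}_{S,U}$ (also written $\mathcal{W}_S$) is $\beta_n$-trajectory-stable if for every $J\in\mathbb{N}^\star$ and every data-dependent selection $\omega$ there is a map $\omega':\mathrm{CL}(\mathbb{R}^d)\times\mathbb{R}^d\to\mathbb{R}^d$ such that (a) almost surely, for all $S$ and $w$, $\omega'(\mathcal{W}_S,w)\in\mathcal{W}_S$; (b) for all $z\in\mathcal{Z}$ and all $S,S'\in\mathcal{Z}^n$ differing in exactly $J$ coordinates, $\mathbb{E}_U\big[|\ell(\omega(\mathcal{W}_{S,U},S),z)-\ell(\omega'(\mathcal{W}_{S',U},\omega(\mathcal{W}_{S,U},S)),z)|\big]\le\beta_n J$. *)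

theory Defs
  imports "HOL-Analysis.Analysis"
begin

definition proj_ball :: "real \<Rightarrow> 'a::euclidean_space \<Rightarrow> 'a" where
  "proj_ball R x = closest_point (cball 0 R) x"

text \<open>S is the sample (a list of length n), idx k is the
  index i_k (in 0..n-1) drawn at step k (k >= 1), eta k the step size of step k.
  psgd ... 0 = w0 and
  w_k = Pi_R [ w_(k-1) - eta_k * grad l (w_(k-1), z_(i_k)) ].\<close>
fun psgd :: "('a::euclidean_space \<Rightarrow> 'z \<Rightarrow> 'a) \<Rightarrow> (nat \<Rightarrow> real) \<Rightarrow> real \<Rightarrow> 'a
             \<Rightarrow> 'z list \<Rightarrow> (nat \<Rightarrow> nat) \<Rightarrow> nat \<Rightarrow> 'a" where
  "psgd gr eta R w0 S idx 0 = w0"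
| "psgd gr eta R w0 S idx (Suc k) =
     proj_ball R (psgd gr eta R w0 S idx k
                  - eta (Suc k) *\<^sub>R gr (psgd gr eta R w0 S idx k) (S ! idx (Suc k)))"

definition traj :: "('a::euclidean_space \<Rightarrow> 'z \<Rightarrow> 'a) \<Rightarrow> (nat \<Rightarrow> real) \<Rightarrow> real \<Rightarrow> 'a
             \<Rightarrow> nat \<Rightarrow> 'z list \<Rightarrow> (nat \<Rightarrow> nat) \<Rightarrow> 'a set" where
  "traj gr eta R w0 T S idx = (\<lambda>k. psgd gr eta R w0 S idx k) ` {1..T}"

text \<open>Only i_1..i_T influence the trajectory, so U ranges over
  the finite set of maps {1..T} -> {0..<n}, each with probability 1/n^T.\<close>
definition idx_space :: "nat \<Rightarrow> nat \<Rightarrow> (nat \<Rightarrow> nat) set" where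
  "idx_space n T = PiE {1..T} (\<lambda>_. {..<n})"

definition expect_U :: "nat \<Rightarrow> nat \<Rightarrow> ((nat \<Rightarrow> nat) \<Rightarrow> real) \<Rightarrow> real" where
  "expect_U n T f = (\<Sum>u\<in>idx_space n T. f u) / real n ^ T"

definition ndiff :: "'z list \<Rightarrow> 'z list \<Rightarrow> nat" where
  "ndiff S S' = card {j. j < length S \<and> S ! j \<noteq> S' ! j}"

definition trajectory_stable ::
  "nat \<Rightarrow> ('u set) \<Rightarrow> (('u \<Rightarrow> real) \<Rightarrow> real) \<Rightarrow> ('a \<Rightarrow> 'z \<Rightarrow> real)
   \<Rightarrow> ('z list \<Rightarrow> 'u \<Rightarrow> 'a set) \<Rightarrow> real \<Rightarrow> bool" where
  "trajectory_stable n Us EU l W beta \<longleftrightarrow>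
     (\<forall>J::nat. J \<ge> 1 \<longrightarrow>
       (\<forall>\<omega> :: 'a set \<Rightarrow> 'z list \<Rightarrow> 'a.
          (\<forall>S u. length S = n \<longrightarrow> u \<in> Us \<longrightarrow> \<omega> (W S u) S \<in> W S u) \<longrightarrow>
          (\<exists>\<omega>' :: 'a set \<Rightarrow> 'a \<Rightarrow> 'a.
             (\<forall>S u w. length S = n \<longrightarrow> u \<in> Us \<longrightarrow> \<omega>' (W S u) w \<in> W S u) \<and>
             (\<forall>z S S'. length S = n \<longrightarrow> length S' = n \<longrightarrow> ndiff S S' = J \<longrightarrow>
                EU (\<lambda>u. \<bar>l (\<omega> (W S u) S) z - l (\<omega>' (W S' u) (\<omega> (W S u) S)) z\<bar>)
                  \<le> beta * real J))))"

end

theory Submission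
  imports Defs
begin

lemma ln_ratio_lower:
  fixes y :: real assumes "0 \<le> y" "y < 1"
  shows "2 * y \<le> ln (1 + y) - ln (1 - y)"
proof -
  let ?f = "\<lambda>y::real. ln (1 + y) - ln (1 - y) - 2 * y"
  have "?f 0 \<le> ?f y"
  proof (rule DERIV_nonneg_imp_nondecreasing[of 0 y ?f])
    fix x :: real assume x: "0 \<le> x" "x \<le> y"
    have "(?f has_real_derivative (1/(1+x) + 1/(1-x) - 2)) (at x)"
    proof -
      have nz: "1 - x * x \<noteq> 0" "1 - x \<noteq> 0" "1 + x \<noteq> 0" using x assms mult_left_le_one_le[of x x] by auto
      show ?thesis
      using x assms nz by (auto intro!: derivative_eq_intros simp: field_simps)
    qed
    moreover have "1/(1+x) + 1/(1-x) - 2 \<ge> 0"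
    proof -
      have "1/(1+x) + 1/(1-x) - 2 = 2 * x^2 / ((1+x)*(1-x))"
        using x assms mult_left_le_one_le[of x x] by (simp add: field_simps power2_eq_square)
      also have "\<dots> \<ge> 0" using x assms by (intro divide_nonneg_pos) auto
      finally show ?thesis .
    qed
    ultimately show "\<exists>y. (?f has_real_derivative y) (at x) \<and> 0 \<le> y" by blast
  qed (use assms in auto)
  then show ?thesis by simp
qed

lemma factor_bound:
  fixes q :: real and r :: nat assumes q: "0 \<le> q" and r: "r \<ge> 1"
  shows "1 + q / real r \<le> ((2 * real r + 1) / (2 * real r - 1)) powr q"
proof -
  have r1: "real r \<ge> 1" using r by simp
  have "1 / real r \<le> ln (1 + 1/(2*real r)) - ln (1 - 1/(2*real r))"
    using ln_ratio_lower[of "1/(2*real r)"] r1 by (simp add: field_simps)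
  also have "\<dots> = ln ((1 + 1/(2*real r)) / (1 - 1/(2*real r)))"
    using r1 by (subst ln_div) (auto simp: field_simps)
  also have "(1 + 1/(2*real r)) / (1 - 1/(2*real r)) = (2 * real r + 1) / (2 * real r - 1)"
    using r1 by (simp add: field_simps)
  finally have l: "1 / real r \<le> ln ((2 * real r + 1) / (2 * real r - 1))" .
  have "1 + q / real r \<le> exp (q / real r)" by (rule exp_ge_add_one_self)
  also have "\<dots> = exp (q * (1 / real r))" by simp
  also have "\<dots> \<le> exp (q * ln ((2 * real r + 1) / (2 * real r - 1)))"
    using l q by (intro exp_mono mult_left_mono) auto
  also have "\<dots> = ((2 * real r + 1) / (2 * real r - 1)) powr q"
    using r1 by (simp add: powr_def mult.commute)
  finally show ?thesis .
qed

lemma prod_bound: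
  fixes q :: real assumes q: "0 \<le> q" and tk: "t \<le> k"
  shows "(\<Prod>r\<in>{t<..k}. 1 + q / real r) \<le> ((2 * real k + 1) / (2 * real t + 1)) powr q"
  using tk
proof (induction k rule: dec_induct)
  case base then show ?case by simp
next
  case (step k)
  have "{t<..Suc k} = insert (Suc k) {t<..k}" using step by auto
  then have "(\<Prod>r\<in>{t<..Suc k}. 1 + q / real r) = (1 + q / real (Suc k)) * (\<Prod>r\<in>{t<..k}. 1 + q / real r)"
    by simp
  also have "\<dots> \<le> ((2 * real (Suc k) + 1) / (2 * real (Suc k) - 1)) powr q * ((2 * real k + 1) / (2 * real t + 1)) powr q"
    using factor_bound[OF q, of "Suc k"] step q
    by (intro mult_mono) (auto intro!: prod_nonneg simp: add_nonneg_nonneg)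
  also have "\<dots> = (((2 * real (Suc k) + 1) / (2 * real (Suc k) - 1)) * ((2 * real k + 1) / (2 * real t + 1))) powr q"
    by (subst powr_mult) (auto simp: field_simps)
  also have "((2 * real (Suc k) + 1) / (2 * real (Suc k) - 1)) * ((2 * real k + 1) / (2 * real t + 1)) = (2 * real (Suc k) + 1) / (2 * real t + 1)"
  proof -
    have e: "2 * real (Suc k) - 1 = 2 * real k + 1" by simp
    have p: "2 * real k + 1 > 0" by simp
    show ?thesis unfolding e using p by simp
  qed
  finally show ?case .
qed


lemma young_q:
  fixes y q :: real assumes "y > 0" "0 \<le> q" "q \<le> 1"
  shows "y powr q \<le> q * y + (1 - q)"
  using Youngs_inequality_0[of q "1 - q" y 1] assms by simp

lemma main_analytic:
  fixes x q :: real and k :: nat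
  assumes k: "k \<ge> 1" and x: "x \<ge> 0" and q: "0 < q" "q < 1"
  shows "\<exists>t\<le>k. 2 * real t + 2 * x * ((\<Prod>r\<in>{t<..k}. 1 + q / real r) - 1)
            \<le> 4 * (x powr (1/(q+1)) * real k powr (q/(q+1)))"
proof -
  define \<tau> where "\<tau> = x powr (1/(q+1)) * real k powr (q/(q+1))"
  have k1: "real k \<ge> 1" using k by simp
  show ?thesis
  proof (cases "x = 0")
    case True
    then show ?thesis by (intro exI[of _ 0]) simp
  next
    case False
    then have xp: "x > 0" using x by simp
    have taup: "\<tau> > 0" unfolding \<tau>_def using xp k1 by simp
    have key: "\<tau> * \<tau> powr q = x * real k powr q"
    proof -
      have "\<tau> * \<tau> powr q = \<tau> powr (1 + q)" using taup by (simp add: powr_add)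
      also have "\<dots> = (x powr (1/(q+1))) powr (1+q) * (real k powr (q/(q+1))) powr (1+q)"
        unfolding \<tau>_def using xp k1 by (simp add: powr_mult)
      also have "\<dots> = x * real k powr q"
      proof -
        have h1: "(1+q)/(q+1) = 1" using q by (simp add: field_simps)
        have h2: "q*(1+q)/(q+1) = q" using q by (simp add: field_simps)
        show ?thesis using xp k1 q by (simp add: powr_powr h1 h2 del: divide_self_if)
      qed
      finally show ?thesis .
    qed
    have Qge: "(\<Prod>r\<in>{t<..k}. 1 + q / real r) \<ge> 1" for t
      using q by (intro prod_ge_1) auto
    consider "\<tau> \<ge> real k" | "\<tau> < 1" | "1 \<le> \<tau>" "\<tau> < real k" by linarith
    then show ?thesis
    proof cases
      case 1
      then show ?thesis by (intro exI[of _ k]) (simp add: \<tau>_def[symmetric])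
    next
      case 2
      have Q0: "(\<Prod>r\<in>{0<..k}. 1 + q / real r) \<le> (2 * real k + 1) powr q"
        using prod_bound[of q 0 k] q by simp
      have a: "(2 * real k + 1) powr q = (2 * real k) powr q * (1 + 1 / (2 * real k)) powr q"
      proof -
        have a0: "(2 * real k) * (1 + 1/(2*real k)) = 2*real k + 1" using k1 by (simp add: field_simps)
        have "(2 * real k + 1) powr q = ((2 * real k) * (1 + 1/(2*real k))) powr q" using a0 by simp
        also have "\<dots> = (2 * real k) powr q * (1 + 1 / (2 * real k)) powr q" by (rule powr_mult)
        finally show ?thesis .
      qed
      have b: "(1 + 1 / (2 * real k)) powr q \<le> 1 + q / (2 * real k)"
        using young_q[of "1 + 1 / (2 * real k)" q] q k1 by (simp add: field_simps)
      have c: "(2 * real k) powr q \<le> 2 * real k"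
        using powr_mono[of q 1 "2 * real k"] q k1 by simp
      have d: "(2 * real k) powr q \<le> 2 * real k powr q"
        using powr_mono[of q 1 2] q k1 by (simp add: powr_mult)
      have "(2 * real k + 1) powr q \<le> (2 * real k) powr q * (1 + q / (2 * real k))"
        unfolding a by (rule mult_left_mono[OF b]) simp
      also have "\<dots> = (2 * real k) powr q + q * ((2 * real k) powr q / (2 * real k))"
        using k1 by (simp add: field_simps)
      also have "\<dots> \<le> 2 * real k powr q + 1 * 1"
        using c d q k1 by (intro add_mono mult_mono) (auto simp: field_simps)
      finally have e: "(\<Prod>r\<in>{0<..k}. 1 + q / real r) - 1 \<le> 2 * real k powr q"
        using Q0 by simp
      have f: "\<tau> powr q \<le> 1" using 2 taup q by (simp add: powr_le1)
      have "2 * real 0 + 2 * x * ((\<Prod>r\<in>{0<..k}. 1 + q / real r) - 1) \<le> 2 * x * (2 * real k powr q)"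
        using e xp by simp
      also have "\<dots> = 4 * \<tau> * \<tau> powr q" using key by simp
      also have "\<dots> \<le> 4 * \<tau>" using f taup by simp
      finally show ?thesis by (intro exI[of _ 0]) (simp add: \<tau>_def[symmetric])
    next
      case 3
      define t where "t = nat \<lfloor>\<tau>\<rfloor>"
      have tl: "real t \<le> \<tau>" "\<tau> < real t + 1" using 3 unfolding t_def by linarith+
      have fl: "1 \<le> \<lfloor>\<tau>\<rfloor>" using 3 by (simp add: le_floor_iff)
      have t1: "real t \<ge> 1" using fl unfolding t_def by linarith
      have tk: "t \<le> k" using tl 3 by linarith
      define s where "s = real t + 1/2"
      define K where "K = real k + 1/2"
      define \<rho> where "\<rho> = \<tau> / s"
      define Q where "Q = (\<Prod>r\<in>{t<..k}. 1 + q / real r)"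
      have sp: "s > 0" unfolding s_def by simp
      have Qb: "Q \<le> (K / s) powr q"
      proof -
        have "(2 * real k + 1) / (2 * real t + 1) = K / s" unfolding K_def s_def by (simp add: field_simps)
        then show ?thesis using prod_bound[of q t k] q tk unfolding Q_def by simp
      qed
      have Kb: "K powr q \<le> real k powr q * (1 + q / (2 * real k))"
      proof -
        have "K powr q = real k powr q * (1 + 1 / (2 * real k)) powr q"
        proof -
          have a0: "real k * (1 + 1/(2*real k)) = K" unfolding K_def using k1 by (simp add: field_simps)
          have "K powr q = (real k * (1 + 1/(2*real k))) powr q" using a0 by simp
          also have "\<dots> = real k powr q * (1 + 1 / (2 * real k)) powr q" by (rule powr_mult)
          finally show ?thesis .
        qed
        also have "\<dots> \<le> real k powr q * (1 + q / (2 * real k))"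
          using young_q[of "1 + 1 / (2 * real k)" q] q k1 by (intro mult_left_mono) (auto simp: field_simps)
        finally show ?thesis .
      qed
      define A where "A = \<rho> powr q"
      have rp: "\<rho> > 0" unfolding \<rho>_def using taup sp by simp
      have rho_le: "\<rho> \<le> 4/3" unfolding \<rho>_def s_def using tl t1 by (simp add: field_simps)
      have A1: "A \<le> q * \<rho> + (1 - q)" unfolding A_def using young_q[of \<rho> q] rp q by simp
      have "q * \<rho> \<le> q * (4/3)" using rho_le q by (intro mult_left_mono) auto
      then have A2: "A \<le> 4/3" using A1 q by linarith
      have Ap: "A \<ge> 0" unfolding A_def by simp
      have xQ: "x * Q \<le> \<tau> * A * (1 + q / (2 * real k))"
      proof -
        have "x * Q \<le> x * (K / s) powr q" using Qb xp by simp
        also have "\<dots> = x * K powr q / s powr q" using sp k1 by (simp add: powr_divide K_def)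
        also have "\<dots> \<le> x * (real k powr q * (1 + q / (2 * real k))) / s powr q"
          using Kb xp sp by (intro divide_right_mono mult_left_mono) auto
        also have "\<dots> = (\<tau> * \<tau> powr q) * (1 + q / (2 * real k)) / s powr q"
          using key by simp
        also have "\<dots> = \<tau> * (\<tau> powr q / s powr q) * (1 + q / (2 * real k))" by simp
        also have "\<tau> powr q / s powr q = A" unfolding A_def \<rho>_def using taup sp by (simp add: powr_divide)
        finally show ?thesis .
      qed
      have tq: "\<tau> powr q \<ge> 1" using 3 q by (simp add: ge_one_powr_ge_zero)
      have kq: "real k powr q \<le> real k" using powr_mono[of q 1 "real k"] q k1 by simp
      have small: "q / real k * \<tau> * A \<le> 2 * x"
      proof -
        have "q * A * real k powr q \<le> 2 * real k * \<tau> powr q"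
        proof -
          have "q * A \<le> 1 * A" using q Ap by (intro mult_right_mono) auto
          then have "q * A \<le> 2" using A2 by linarith
          then have "q * A * real k powr q \<le> 2 * real k powr q" by (intro mult_right_mono) auto
          then have "q * A * real k powr q \<le> 2 * real k" using kq by linarith
          also have "\<dots> \<le> 2 * real k * \<tau> powr q" using tq k1 by simp
          finally show ?thesis .
        qed
        then have "q * A * real k powr q * \<tau> \<le> 2 * real k * \<tau> powr q * \<tau>"
          using taup by (simp add: mult_right_mono)
        moreover have "2 * real k * \<tau> powr q * \<tau> = 2 * real k * (\<tau> * \<tau> powr q)" by (simp add: algebra_simps)
        moreover have "2 * real k * (\<tau> * \<tau> powr q) = 2 * real k * x * real k powr q" by (simp only: key mult.assoc)
        moreover have "q * A * real k powr q * \<tau> = q * A * \<tau> * real k powr q" by (simp add: algebra_simps)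
        ultimately have "q * A * \<tau> * real k powr q \<le> 2 * real k * x * real k powr q"
          by linarith
        then have "q * A * \<tau> \<le> 2 * real k * x"
          using k1 by (simp add: mult_le_cancel_right)
        then show ?thesis using k1 by (simp add: field_simps)
      qed
      have big: "q * \<tau> * (\<rho> - 1) \<le> \<tau> - real t"
      proof -
        have e1: "\<tau> * (\<rho> - 1) = \<rho> * (\<tau> - real t - 1/2)"
          unfolding \<rho>_def s_def using sp by (simp add: field_simps s_def)
        show ?thesis
        proof (cases "\<tau> - real t \<le> 1/2")
          case True
          then have "\<rho> * (\<tau> - real t - 1/2) \<le> 0" using rp by (simp add: mult_nonneg_nonpos)
          then have "q * (\<tau> * (\<rho> - 1)) \<le> 0" using e1 q by (simp add: mult_nonneg_nonpos)
          then show ?thesis using tl by (simp add: mult.assoc)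
        next
          case False
          then have "\<rho> * (\<tau> - real t - 1/2) \<le> 4/3 * (\<tau> - real t - 1/2)" using rho_le False by (intro mult_right_mono) auto
          also have "\<dots> \<le> \<tau> - real t" using tl by simp
          finally have "\<tau> * (\<rho> - 1) \<le> \<tau> - real t" using e1 by simp
          moreover have "\<tau> * (\<rho> - 1) \<ge> 0" using False e1 rp by simp
          ultimately have "q * (\<tau> * (\<rho> - 1)) \<le> \<tau> * (\<rho> - 1)" using q by (intro mult_left_le_one_le) auto
          then show ?thesis using \<open>\<tau> * (\<rho> - 1) \<le> \<tau> - real t\<close> by (simp add: mult.assoc)
        qed
      qed
      have "2 * real t + 2 * x * (Q - 1) = 2 * real t + 2 * (x * Q) - 2 * x" by (simp add: algebra_simps)
      also have "\<dots> \<le> 2 * real t + 2 * (\<tau> * A * (1 + q / (2 * real k))) - 2 * x" using xQ by simp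
      also have "\<dots> = 2 * real t + 2 * \<tau> * A + q / real k * \<tau> * A - 2 * x" using k1 by (simp add: field_simps)
      also have "\<dots> \<le> 2 * real t + 2 * \<tau> * (q * \<rho> + (1 - q)) + 2 * x - 2 * x"
      proof -
        have "2 * \<tau> * A \<le> 2 * \<tau> * (q * \<rho> + (1 - q))" using A1 taup by (intro mult_left_mono) auto
        then show ?thesis using small by linarith
      qed
      also have "\<dots> = 2 * real t + 2 * \<tau> + 2 * (q * \<tau> * (\<rho> - 1))" by (simp add: algebra_simps)
      also have "\<dots> \<le> 4 * \<tau>" using big by simp
      finally show ?thesis using tk unfolding Q_def by (intro exI[of _ t]) (simp add: \<tau>_def[symmetric])
    qed
  qed
qed


lemma deriv_bound_lip:
  fixes f :: "real \<Rightarrow> real"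
  assumes d: "(f has_field_derivative D) (at 0)"
    and lip: "\<And>y. \<bar>f y - f 0\<bar> \<le> M * \<bar>y\<bar>"
  shows "\<bar>D\<bar> \<le> M"
proof -
  have "((\<lambda>y. (f y - f 0) / (y - 0)) \<longlongrightarrow> D) (at 0)"
    using d by (simp add: has_field_derivative_iff)
  then have "((\<lambda>y. \<bar>(f y - f 0) / (y - 0)\<bar>) \<longlongrightarrow> \<bar>D\<bar>) (at 0)"
    by (rule tendsto_rabs)
  moreover have "eventually (\<lambda>y. \<bar>(f y - f 0) / (y - 0)\<bar> \<le> M) (at (0::real))"
  proof (rule eventually_at_filter[THEN iffD2], rule always_eventually, intro allI impI)
    fix y :: real assume "y \<noteq> 0"
    then show "\<bar>(f y - f 0) / (y - 0)\<bar> \<le> M"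
      using lip[of y] by (simp add: abs_divide divide_le_eq)
  qed
  ultimately show ?thesis by (rule tendsto_upperbound) simp
qed

lemma grad_norm_bound:
  fixes l :: "'a::euclidean_space \<Rightarrow> 'z \<Rightarrow> real" and gradl :: "'a \<Rightarrow> 'z \<Rightarrow> 'a"
  assumes grad: "\<And>w z. ((\<lambda>v. l v z) has_derivative (\<lambda>h. gradl w z \<bullet> h)) (at w)"
    and lip: "\<And>w w' z. \<bar>l w z - l w' z\<bar> \<le> L * norm (w - w')"
  shows "norm (gradl w z) \<le> L"
proof -
  define g where "g = gradl w z"
  define \<phi> where "\<phi> = (\<lambda>s::real. l (w + s *\<^sub>R g) z)"
  have L0: "L \<ge> 0"
  proof -
    obtain b :: 'a where b: "b \<in> Basis" using nonempty_Basis by blast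
    have "0 \<le> L * norm (b - 0)" using lip[of b z 0] by linarith
    then show ?thesis using b by (simp add: zero_le_mult_iff)
  qed
  have d1: "((\<lambda>s::real. w + s *\<^sub>R g) has_derivative (\<lambda>s. s *\<^sub>R g)) (at 0)"
    by (auto intro!: derivative_eq_intros)
  have d2: "((\<lambda>v. l v z) has_derivative (\<lambda>h. g \<bullet> h)) (at (w + 0 *\<^sub>R g))"
    using grad[of z w] by (simp add: g_def)
  have "(\<phi> has_derivative (\<lambda>s. g \<bullet> (s *\<^sub>R g))) (at 0)"
    unfolding \<phi>_def using diff_chain_at[OF d1 d2] by (simp add: o_def)
  then have "(\<phi> has_field_derivative (g \<bullet> g)) (at 0)"
  proof -
    assume a: "(\<phi> has_derivative (\<lambda>s. g \<bullet> (s *\<^sub>R g))) (at 0)"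
    have "(\<lambda>s. g \<bullet> (s *\<^sub>R g)) = (*) (g \<bullet> g)" by (rule ext) (simp add: mult.commute)
    then show ?thesis using a by (simp add: has_field_derivative_def)
  qed
  moreover have "\<bar>\<phi> y - \<phi> 0\<bar> \<le> (L * norm g) * \<bar>y\<bar>" for y
    using lip[of "w + y *\<^sub>R g" z w] by (simp add: \<phi>_def mult_ac)
  ultimately have "\<bar>g \<bullet> g\<bar> \<le> L * norm g" by (rule deriv_bound_lip)
  then have "norm g * norm g \<le> L * norm g" by (simp add: dot_square_norm power2_eq_square)
  then show ?thesis using L0 unfolding g_def[symmetric]
    by (cases "norm g = 0") (auto simp: mult_le_cancel_right)
qed

lemma psgd_dep:
  assumes "\<forall>j\<in>{1..t}. u j = v j"
  shows "psgd gr eta R w0 S u t = psgd gr eta R w0 S v t"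
  using assms by (induction t) auto

lemma psgd_same:
  assumes "\<forall>j\<in>{1..t}. S ! (u j) = S' ! (u j)"
  shows "psgd gr eta R w0 S u t = psgd gr eta R w0 S' u t"
  using assms by (induction t) auto

lemma proj_norm: "R \<ge> 0 \<Longrightarrow> norm (proj_ball R x) \<le> R"
  unfolding proj_ball_def using closest_point_in_set[of "cball 0 R" x] by auto

lemma proj_lip: "R \<ge> 0 \<Longrightarrow> norm (proj_ball R x - proj_ball R y) \<le> norm (x - y)"
  unfolding proj_ball_def using closest_point_lipschitz[of "cball 0 R" x y]
  by (auto simp: dist_norm)

subsection \<open>Expectation over index space\<close>

lemma idx_space_Suc:
  "idx_space n (Suc m) = (\<lambda>(y, g). g(Suc m := y)) ` ({..<n} \<times> idx_space n m)"
proof -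
  have "{1..Suc m} = insert (Suc m) {1..m}" by auto
  then show ?thesis unfolding idx_space_def by (simp add: PiE_insert_eq)
qed

lemma finite_idx_space: "finite (idx_space n m)"
  unfolding idx_space_def by (auto intro!: finite_PiE)

lemma card_idx_space: "card (idx_space n m) = n ^ m"
  unfolding idx_space_def by (simp add: card_PiE)

lemma E_step:
  assumes n: "n > 0"
    and h: "\<And>u. u \<in> idx_space n m \<Longrightarrow> (\<Sum>a<n. f (u(Suc m := a))) / real n \<le> g u"
  shows "expect_U n (Suc m) f \<le> expect_U n m g"
proof -
  have inj: "inj_on (\<lambda>(y, g). g(Suc m := y)) ({..<n} \<times> idx_space n m)"
    unfolding idx_space_def by (rule inj_combinator) auto
  have "(\<Sum>u\<in>idx_space n (Suc m). f u) = (\<Sum>p\<in>{..<n} \<times> idx_space n m. f ((\<lambda>(y, g). g(Suc m := y)) p))"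
    unfolding idx_space_Suc using sum.reindex[OF inj, of f] by (simp add: o_def)
  also have "\<dots> = (\<Sum>a<n. \<Sum>u\<in>idx_space n m. f (u(Suc m := a)))"
    by (simp add: sum.cartesian_product split_def)
  also have "\<dots> = (\<Sum>u\<in>idx_space n m. \<Sum>a<n. f (u(Suc m := a)))"
    by (rule sum.swap)
  also have "\<dots> \<le> (\<Sum>u\<in>idx_space n m. real n * g u)"
    using h n by (intro sum_mono) (simp add: divide_le_eq mult.commute)
  also have "\<dots> = real n * (\<Sum>u\<in>idx_space n m. g u)" by (simp add: sum_distrib_left)
  finally have "(\<Sum>u\<in>idx_space n (Suc m). f u) \<le> real n * (\<Sum>u\<in>idx_space n m. g u)" .
  then show ?thesis unfolding expect_U_def using n
    by (simp add: divide_le_eq field_simps)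
qed

lemma E_mono:
  assumes "\<And>u. u \<in> idx_space n m \<Longrightarrow> f u \<le> g u"
  shows "expect_U n m f \<le> expect_U n m g"
  unfolding expect_U_def using assms by (intro divide_right_mono sum_mono) auto

lemma E_add: "expect_U n m (\<lambda>u. f u + g u) = expect_U n m f + expect_U n m g"
  unfolding expect_U_def by (simp add: sum.distrib add_divide_distrib)

lemma E_cmult: "expect_U n m (\<lambda>u. c * f u) = c * expect_U n m f"
  unfolding expect_U_def by (simp add: sum_distrib_left)

lemma E_const: "n > 0 \<Longrightarrow> expect_U n m (\<lambda>u. c) = c"
  unfolding expect_U_def by (simp add: card_idx_space)

lemma E_sum: "finite K \<Longrightarrow> expect_U n m (\<lambda>u. \<Sum>k\<in>K. f k u) = (\<Sum>k\<in>K. expect_U n m (f k))"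
  unfolding expect_U_def by (simp add: sum.swap[of _ K] sum_divide_distrib)

lemma E_invariant:
  assumes n: "n > 0" and h: "\<And>u a. u \<in> idx_space n m \<Longrightarrow> f (u(Suc m := a)) = f u"
  shows "expect_U n (Suc m) f \<le> expect_U n m f"
  using n h by (intro E_step) auto


context
  fixes gradl :: "'a::euclidean_space \<Rightarrow> 'z \<Rightarrow> 'a" and eta :: "nat \<Rightarrow> real"
    and R L G q :: real and w0 :: 'a and n :: nat and S S' :: "'z list"
  assumes glip: "\<And>w w' z. norm (gradl w z - gradl w' z) \<le> G * norm (w - w')"
    and gbound: "\<And>w z. norm (gradl w z) \<le> L"
    and G_pos: "G > 0" and R_pos: "R > 0" and q_pos: "q > 0"
    and eta_nonneg: "\<And>k. k \<ge> 1 \<Longrightarrow> eta k \<ge> 0"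
    and eta_q: "\<And>k. k \<ge> 1 \<Longrightarrow> eta k * G \<le> q / real k"
    and n_pos: "n > 0"
begin

abbreviation "Wt u t \<equiv> psgd gradl eta R w0 S u t"
abbreviation "Wt' u t \<equiv> psgd gradl eta R w0 S' u t"
abbreviation "dl u t \<equiv> norm (Wt u t - Wt' u t)"
abbreviation "Dset \<equiv> {j. j < n \<and> S ! j \<noteq> S' ! j}"
abbreviation "Bad t0 u \<equiv> (\<exists>j\<in>{1..t0}. u j \<in> Dset)"
abbreviation "pp \<equiv> real (card Dset) / real n"

lemma L_nonneg: "L \<ge> 0"
  using gbound[of w0 "S ! 0"] norm_ge_zero[of "gradl w0 (S ! 0)"] by linarith

lemma Dset_sub: "Dset \<subseteq> {..<n}" by auto

lemma pp_nonneg: "pp \<ge> 0" by simp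

lemma pp_le1: "pp \<le> 1"
proof -
  have "card Dset \<le> card {..<n}" by (rule card_mono) auto
  then show ?thesis using n_pos by simp
qed

lemma one_step:
  assumes a: "a < n"
  shows "dl (u(Suc t := a)) (Suc t) \<le> dl u t + eta (Suc t) * (G * dl u t + (if a \<in> Dset then 2 * L else 0))"
proof -
  define x where "x = Wt u t"
  define x' where "x' = Wt' u t"
  define \<eta> where "\<eta> = eta (Suc t)"
  have e0: "\<eta> \<ge> 0" unfolding \<eta>_def using eta_nonneg[of "Suc t"] by simp
  have w1: "Wt (u(Suc t := a)) t = x" unfolding x_def by (rule psgd_dep) auto
  have w2: "Wt' (u(Suc t := a)) t = x'" unfolding x'_def by (rule psgd_dep) auto
  have "dl (u(Suc t := a)) (Suc t) = norm (proj_ball R (x - \<eta> *\<^sub>R gradl x (S ! a)) - proj_ball R (x' - \<eta> *\<^sub>R gradl x' (S' ! a)))"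
    using w1 w2 by (simp add: \<eta>_def)
  also have "\<dots> \<le> norm ((x - \<eta> *\<^sub>R gradl x (S ! a)) - (x' - \<eta> *\<^sub>R gradl x' (S' ! a)))"
    using R_pos by (intro proj_lip) simp
  also have "(x - \<eta> *\<^sub>R gradl x (S ! a)) - (x' - \<eta> *\<^sub>R gradl x' (S' ! a)) = (x - x') - \<eta> *\<^sub>R (gradl x (S ! a) - gradl x' (S' ! a))"
    by (simp add: algebra_simps)
  also have "norm \<dots> \<le> norm (x - x') + \<eta> * norm (gradl x (S ! a) - gradl x' (S' ! a))"
    using e0 by (metis abs_of_nonneg norm_scaleR norm_triangle_ineq4)
  also have "\<dots> \<le> norm (x - x') + \<eta> * (G * norm (x - x') + (if a \<in> Dset then 2 * L else 0))"
  proof -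
    have "norm (gradl x (S ! a) - gradl x' (S' ! a)) \<le> G * norm (x - x') + (if a \<in> Dset then 2 * L else 0)"
    proof (cases "a \<in> Dset")
      case True
      have "norm (gradl x (S ! a) - gradl x' (S' ! a)) \<le> norm (gradl x (S ! a)) + norm (gradl x' (S' ! a))"
        by (rule norm_triangle_ineq4)
      also have "\<dots> \<le> 2 * L" using gbound[of x "S ! a"] gbound[of x' "S' ! a"] by simp
      moreover have "G * norm (x - x') \<ge> 0" using G_pos by simp
      ultimately show ?thesis using True by simp
    next
      case False
      then have "S ! a = S' ! a" using a by simp
      then show ?thesis using glip[of x "S ! a" x'] False by simp
    qed
    then show ?thesis using e0 by (intro add_left_mono mult_left_mono) auto
  qed
  finally show ?thesis unfolding x_def x'_def \<eta>_def .
qed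

lemma idx_mem: "u \<in> idx_space n m \<Longrightarrow> j \<in> {1..m} \<Longrightarrow> u j < n"
  unfolding idx_space_def by (auto simp: PiE_def Pi_def)

lemma good_zero:
  assumes u: "u \<in> idx_space n m" and t0: "t0 \<le> m" and nb: "\<not> Bad t0 u"
  shows "dl u t0 = 0"
proof -
  have "\<forall>j\<in>{1..t0}. S ! (u j) = S' ! (u j)"
  proof
    fix j assume j: "j \<in> {1..t0}"
    then have "u j < n" using idx_mem[OF u, of j] t0 by auto
    then show "S ! (u j) = S' ! (u j)" using nb j by auto
  qed
  then have "Wt u t0 = Wt' u t0" by (rule psgd_same)
  then show ?thesis by simp
qed

lemma dl_le: "t \<ge> 1 \<Longrightarrow> dl u t \<le> 2 * R"
proof -
  assume "t \<ge> 1"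
  then obtain s where s: "t = Suc s" by (cases t) auto
  have "norm (Wt u t) \<le> R" "norm (Wt' u t) \<le> R" unfolding s using R_pos by (simp_all add: proj_norm)
  then show ?thesis using norm_triangle_ineq4[of "Wt u t" "Wt' u t"] by simp
qed

lemma sum_ind: "(\<Sum>a<n. (if a \<in> Dset then c else 0)) = c * real (card Dset)"
proof -
  have "(\<Sum>a<n. (if a \<in> Dset then c else 0)) = (\<Sum>a\<in>{..<n} \<inter> Dset. c)"
    by (rule sum.inter_restrict[symmetric]) simp
  also have "{..<n} \<inter> Dset = Dset" by auto
  finally show ?thesis by simp
qed

lemma a_rec:
  assumes "t0 \<le> t"
  shows "expect_U n t (\<lambda>u. if Bad t0 u then 0 else dl u t)
           \<le> 2 * pp * L / G * ((\<Prod>r\<in>{t0<..t}. 1 + q / real r) - 1)"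
  using assms
proof (induction t rule: dec_induct)
  case base
  have "expect_U n t0 (\<lambda>u. if Bad t0 u then 0 else dl u t0) \<le> expect_U n t0 (\<lambda>u. 0)"
    by (rule E_mono) (use good_zero in auto)
  then show ?case using n_pos by (simp add: E_const)
next
  case (step t)
  define \<eta> where "\<eta> = eta (Suc t)"
  have e0: "\<eta> \<ge> 0" unfolding \<eta>_def using eta_nonneg[of "Suc t"] by simp
  have eq: "\<eta> * G \<le> q / real (Suc t)" unfolding \<eta>_def using eta_q[of "Suc t"] by simp
  have L0: "L \<ge> 0" by (rule L_nonneg)
  define Q where "Q = (\<Prod>r\<in>{t0<..t}. 1 + q / real r)"
  have Q1: "Q \<ge> 1" unfolding Q_def using q_pos by (intro prod_ge_1) auto
  have "expect_U n (Suc t) (\<lambda>u. if Bad t0 u then 0 else dl u (Suc t))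
        \<le> expect_U n t (\<lambda>u. (1 + \<eta> * G) * (if Bad t0 u then 0 else dl u t) + 2 * \<eta> * L * pp)"
  proof (rule E_step[OF n_pos])
    fix u assume u: "u \<in> idx_space n t"
    have bad_eq: "Bad t0 (u(Suc t := a)) = Bad t0 u" for a using step by auto
    show "(\<Sum>a<n. (\<lambda>u. if Bad t0 u then 0 else dl u (Suc t)) (u(Suc t := a))) / real n
          \<le> (1 + \<eta> * G) * (if Bad t0 u then 0 else dl u t) + 2 * \<eta> * L * pp"
    proof (cases "Bad t0 u")
      case True
      then show ?thesis using bad_eq e0 L0 by simp
    next
      case False
      have "(\<Sum>a<n. (\<lambda>u. if Bad t0 u then 0 else dl u (Suc t)) (u(Suc t := a)))
            = (\<Sum>a<n. dl (u(Suc t := a)) (Suc t))"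
      proof -
        have nb: "(\<exists>j\<in>{1..t0}. (u(Suc t := a)) j \<in> Dset) = False" for a using bad_eq False by blast
        show ?thesis by (intro sum.cong refl) (simp only: nb if_False)
      qed
      also have "\<dots> \<le> (\<Sum>a<n. dl u t + \<eta> * (G * dl u t) + \<eta> * (if a \<in> Dset then 2 * L else 0))"
        by (rule sum_mono) (use one_step in \<open>auto simp: \<eta>_def algebra_simps\<close>)
      also have "\<dots> = real n * ((1 + \<eta> * G) * dl u t) + \<eta> * (2 * L * real (card Dset))"
        by (simp only: sum.distrib sum_distrib_left[symmetric] sum_ind) (simp add: algebra_simps)
      finally have "(\<Sum>a<n. (\<lambda>u. if Bad t0 u then 0 else dl u (Suc t)) (u(Suc t := a))) / real n
         \<le> (real n * ((1 + \<eta> * G) * dl u t) + \<eta> * (2 * L * real (card Dset))) / real n"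
        using n_pos by (intro divide_right_mono) auto
      also have "\<dots> = (1 + \<eta> * G) * dl u t + 2 * \<eta> * L * pp" using n_pos by (simp add: field_simps)
      finally have fin: "(\<Sum>a<n. (\<lambda>u. if Bad t0 u then 0 else dl u (Suc t)) (u(Suc t := a))) / real n
         \<le> (1 + \<eta> * G) * dl u t + 2 * \<eta> * L * pp" .
      show ?thesis unfolding if_not_P[OF False] by (rule fin)
    qed
  qed
  also have "\<dots> = (1 + \<eta> * G) * expect_U n t (\<lambda>u. if Bad t0 u then 0 else dl u t) + 2 * \<eta> * L * pp"
    using n_pos by (simp add: E_add E_cmult E_const)
  also have "\<dots> \<le> (1 + \<eta> * G) * (2 * pp * L / G * (Q - 1)) + 2 * \<eta> * L * pp"
    using step.IH e0 G_pos unfolding Q_def by (intro add_right_mono mult_left_mono) auto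
  also have "\<dots> = 2 * pp * L / G * ((1 + \<eta> * G) * Q - 1)"
    using G_pos n_pos by (simp add: field_simps)
  also have "\<dots> \<le> 2 * pp * L / G * ((1 + q / real (Suc t)) * Q - 1)"
    using eq Q1 L0 G_pos by (intro mult_left_mono diff_right_mono mult_right_mono) auto
  also have "(1 + q / real (Suc t)) * Q = (\<Prod>r\<in>{t0<..Suc t}. 1 + q / real r)"
  proof -
    have "{t0<..Suc t} = insert (Suc t) {t0<..t}" using step by auto
    then show ?thesis unfolding Q_def by simp
  qed
  finally show ?case .
qed

lemma b_rec:
  "expect_U n t (\<lambda>u. if Bad (min t t0) u then 1 else 0) \<le> real (min t t0) * pp"
proof (induction t)
  case 0
  then show ?case using n_pos by (simp add: E_const)
next
  case (Suc t)
  have "expect_U n (Suc t) (\<lambda>u. if Bad (min (Suc t) t0) u then 1 else 0)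
        \<le> expect_U n t (\<lambda>u. (if Bad (min t t0) u then 1 else 0) + (if Suc t \<le> t0 then pp else 0))"
  proof (rule E_step[OF n_pos])
    fix u assume u: "u \<in> idx_space n t"
    show "(\<Sum>a<n. (\<lambda>u. if Bad (min (Suc t) t0) u then 1 else 0) (u(Suc t := a))) / real n
          \<le> (if Bad (min t t0) u then 1 else 0) + (if Suc t \<le> t0 then pp else 0)"
    proof (cases "Suc t \<le> t0")
      case True
      then have mm: "min (Suc t) t0 = Suc t" "min t t0 = t" by auto
      have "(\<Sum>a<n. (\<lambda>u. if Bad (min (Suc t) t0) u then 1 else 0) (u(Suc t := a)))
            \<le> (\<Sum>a<n. (if Bad t u then 1 else 0) + (if a \<in> Dset then (1::real) else 0))"
      proof (rule sum_mono)
        fix a assume "a \<in> {..<n}"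
        have "Bad (Suc t) (u(Suc t := a)) \<longleftrightarrow> Bad t u \<or> a \<in> Dset"
        proof
          assume "Bad (Suc t) (u(Suc t := a))"
          then obtain j where j: "j \<in> {1..Suc t}" "(u(Suc t := a)) j \<in> Dset" by blast
          then show "Bad t u \<or> a \<in> Dset"
            by (cases "j = Suc t") auto
        next
          assume "Bad t u \<or> a \<in> Dset"
          then show "Bad (Suc t) (u(Suc t := a))"
          proof
            assume "Bad t u"
            then obtain j where "j \<in> {1..t}" "u j \<in> Dset" by blast
            then show ?thesis by (intro bexI[of _ j]) auto
          next
            assume "a \<in> Dset" then show ?thesis by (intro bexI[of _ "Suc t"]) auto
          qed
        qed
        then show "(\<lambda>u. if Bad (min (Suc t) t0) u then 1 else (0::real)) (u(Suc t := a))
                   \<le> (if Bad t u then 1 else 0) + (if a \<in> Dset then 1 else 0)"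
          unfolding mm by auto
      qed
      also have "\<dots> = real n * (if Bad t u then 1 else 0) + real (card Dset)"
        using sum_ind[of 1] by (simp add: sum.distrib)
      finally have "(\<Sum>a<n. (\<lambda>u. if Bad (min (Suc t) t0) u then 1 else 0) (u(Suc t := a))) / real n
          \<le> (real n * (if Bad t u then 1 else 0) + real (card Dset)) / real n"
        using n_pos by (intro divide_right_mono) auto
      also have "\<dots> = (if Bad t u then 1 else 0) + pp" using n_pos by (simp add: add_divide_distrib)
      finally show ?thesis unfolding if_P[OF True] mm(2) .
    next
      case False
      then have mm: "min (Suc t) t0 = t0" "min t t0 = t0" by auto
      have bad_eq: "Bad t0 (u(Suc t := a)) = Bad t0 u" for a using False by auto
      show ?thesis unfolding mm using bad_eq False n_pos by simp
    qed
  qed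
  also have "\<dots> = expect_U n t (\<lambda>u. if Bad (min t t0) u then 1 else 0) + (if Suc t \<le> t0 then pp else 0)"
    using n_pos by (simp add: E_add E_const)
  also have "\<dots> \<le> real (min t t0) * pp + (if Suc t \<le> t0 then pp else 0)"
    using Suc.IH by simp
  also have "\<dots> = real (min (Suc t) t0) * pp" using n_pos by (auto simp: min_def field_simps)
  finally show ?case .
qed

lemma level_k:
  assumes k: "k \<ge> 1" and t0: "t0 \<le> k"
  shows "expect_U n k (\<lambda>u. dl u k) \<le> 2 * R * real t0 * pp + 2 * pp * L / G * ((\<Prod>r\<in>{t0<..k}. 1 + q / real r) - 1)"
proof -
  have mm: "min k t0 = t0" using t0 by simp
  have "expect_U n k (\<lambda>u. dl u k) \<le> expect_U n k (\<lambda>u. (if Bad t0 u then 0 else dl u k) + 2 * R * (if Bad (min k t0) u then 1 else 0))"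
    by (rule E_mono) (use dl_le[OF k] R_pos in \<open>auto simp: mm\<close>)
  also have "\<dots> = expect_U n k (\<lambda>u. if Bad t0 u then 0 else dl u k) + 2 * R * expect_U n k (\<lambda>u. if Bad (min k t0) u then 1 else 0)"
    by (simp add: E_add E_cmult)
  also have "\<dots> \<le> 2 * pp * L / G * ((\<Prod>r\<in>{t0<..k}. 1 + q / real r) - 1) + 2 * R * (real (min k t0) * pp)"
    using a_rec[OF t0] b_rec[of k t0] R_pos by (intro add_mono mult_left_mono) auto
  finally show ?thesis unfolding mm by simp
qed

lemma lift:
  assumes "k \<le> T"
  shows "expect_U n T (\<lambda>u. dl u k) \<le> expect_U n k (\<lambda>u. dl u k)"
  using assms
proof (induction T rule: dec_induct)
  case base then show ?case by simp
next
  case (step m)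
  have "expect_U n (Suc m) (\<lambda>u. dl u k) \<le> expect_U n m (\<lambda>u. dl u k)"
  proof (rule E_invariant[OF n_pos])
    fix u a
    have "Wt (u(Suc m := a)) k = Wt u k" by (rule psgd_dep) (use step in auto)
    moreover have "Wt' (u(Suc m := a)) k = Wt' u k" by (rule psgd_dep) (use step in auto)
    ultimately show "dl (u(Suc m := a)) k = dl u k" by simp
  qed
  then show ?case using step.IH by simp
qed

lemma final_k:
  assumes k: "k \<ge> 1" "k \<le> T" and q1: "q < 1"
  shows "expect_U n T (\<lambda>u. dl u k) \<le> 4 * R * pp * ((L / (G * R)) powr (1 / (q + 1)) * real k powr (q / (q + 1)))"
proof -
  define x where "x = L / (G * R)"
  have x0: "x \<ge> 0" unfolding x_def using L_nonneg G_pos R_pos by simp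
  obtain t0 where t0: "t0 \<le> k"
    and ineq: "2 * real t0 + 2 * x * ((\<Prod>r\<in>{t0<..k}. 1 + q / real r) - 1)
            \<le> 4 * (x powr (1/(q+1)) * real k powr (q/(q+1)))"
    using main_analytic[OF k(1) x0 q_pos q1] by blast
  have xR: "x * R = L / G" unfolding x_def using R_pos G_pos by simp
  have "expect_U n T (\<lambda>u. dl u k) \<le> expect_U n k (\<lambda>u. dl u k)" by (rule lift[OF k(2)])
  also have "\<dots> \<le> 2 * R * real t0 * pp + 2 * pp * L / G * ((\<Prod>r\<in>{t0<..k}. 1 + q / real r) - 1)"
    by (rule level_k[OF k(1) t0])
  also have "\<dots> = R * pp * (2 * real t0 + 2 * x * ((\<Prod>r\<in>{t0<..k}. 1 + q / real r) - 1))"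
  proof -
    have LxRG: "L = x * R * G" unfolding x_def using G_pos R_pos by simp
    have "\<forall>Q. 2 * R * real t0 * pp + 2 * pp * L / G * (Q - 1) = R * pp * (2 * real t0 + 2 * x * (Q - 1))"
      using G_pos n_pos by (subst LxRG) (simp add: field_simps)
    then show ?thesis by blast
  qed
  also have "\<dots> \<le> R * pp * (4 * (x powr (1/(q+1)) * real k powr (q/(q+1))))"
    using ineq R_pos by (intro mult_left_mono) auto
  finally show ?thesis unfolding x_def by (simp add: algebra_simps)
qed

end


theorem corollary1:
  fixes l :: "'a::euclidean_space \<Rightarrow> 'z \<Rightarrow> real"
    and gradl :: "'a \<Rightarrow> 'z \<Rightarrow> 'a"
    and L G R c :: real and n T :: nat
    and eta :: "nat \<Rightarrow> real" and w0 :: 'a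
  assumes grad: "\<And>w z. ((\<lambda>v. l v z) has_derivative (\<lambda>h. gradl w z \<bullet> h)) (at w)"
    and lip: "\<And>w w' z. \<bar>l w z - l w' z\<bar> \<le> L * norm (w - w')"
    and glip: "\<And>w w' z. norm (gradl w z - gradl w' z) \<le> G * norm (w - w')"
    and G_pos: "G > 0"
    and R_pos: "R > 0"
    and c_pos: "c > 0" and c_lt: "c < 1 / G"
    and eta_nonneg: "\<And>k. k \<ge> 1 \<Longrightarrow> eta k \<ge> 0"
    and eta_le: "\<And>k. k \<ge> 1 \<Longrightarrow> eta k \<le> c / real k"
    and n_ge: "n \<ge> 2"
  shows "trajectory_stable n (idx_space n T) (expect_U n T) l
           (traj gradl eta R w0 T)
           (4 * L * R / (real n - 1) * (L / (G * R)) powr (1 / (G * c + 1))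
              * (\<Sum>k = 1..T. real k powr (G * c / (G * c + 1))))"
proof -
  define q where "q = G * c"
  have q_pos: "q > 0" unfolding q_def using G_pos c_pos by simp
  have q1: "q < 1" unfolding q_def using c_lt G_pos by (simp add: field_simps)
  have n_pos: "n > 0" using n_ge by simp
  have gbound: "\<And>w z. norm (gradl w z) \<le> L" by (rule grad_norm_bound[OF grad lip])
  have L0: "L \<ge> 0" using gbound[of w0 undefined] norm_ge_zero[of "gradl w0 undefined"] by linarith
  have eta_q: "\<And>k. k \<ge> 1 \<Longrightarrow> eta k * G \<le> q / real k"
  proof -
    fix k :: nat assume k: "k \<ge> 1"
    have "eta k * G \<le> c / real k * G" using eta_le[OF k] G_pos by (intro mult_right_mono) auto
    then show "eta k * G \<le> q / real k" unfolding q_def by (simp add: field_simps)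
  qed
  define x where "x = L / (G * R)"
  define \<beta> where "\<beta> = 4 * L * R / (real n - 1) * x powr (1 / (q + 1)) * (\<Sum>k = 1..T. real k powr (q / (q + 1)))"
  have "trajectory_stable n (idx_space n T) (expect_U n T) l (traj gradl eta R w0 T) \<beta>"
    unfolding trajectory_stable_def
  proof (intro allI impI)
    fix J :: nat and \<omega> :: "'a set \<Rightarrow> 'z list \<Rightarrow> 'a"
    assume J: "J \<ge> 1"
      and h\<omega>: "\<forall>S u. length S = n \<longrightarrow> u \<in> idx_space n T \<longrightarrow> \<omega> (traj gradl eta R w0 T S u) S \<in> traj gradl eta R w0 T S u"
    have T1: "T \<ge> 1"
    proof (rule ccontr)
      assume "\<not> T \<ge> 1"
      then have T0: "T = 0" by simp
      have "(\<lambda>_. undefined) \<in> idx_space n T" unfolding idx_space_def T0 by simp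
      moreover have "length (replicate n (undefined::'z)) = n" by simp
      ultimately have "\<omega> (traj gradl eta R w0 T (replicate n undefined) (\<lambda>_. undefined)) (replicate n undefined)
          \<in> traj gradl eta R w0 T (replicate n undefined) (\<lambda>_. undefined)" using h\<omega> by blast
      then show False unfolding traj_def T0 by simp
    qed
    have fin: "finite (traj gradl eta R w0 T S u)" for S u unfolding traj_def by simp
    have ne: "traj gradl eta R w0 T S u \<noteq> {}" for S u unfolding traj_def using T1 by auto
    show "\<exists>\<omega>'. (\<forall>S u w. length S = n \<longrightarrow> u \<in> idx_space n T \<longrightarrow> \<omega>' (traj gradl eta R w0 T S u) w \<in> traj gradl eta R w0 T S u) \<and>
            (\<forall>z S S'. length S = n \<longrightarrow> length S' = n \<longrightarrow> ndiff S S' = J \<longrightarrow>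
               expect_U n T (\<lambda>u. \<bar>l (\<omega> (traj gradl eta R w0 T S u) S) z - l (\<omega>' (traj gradl eta R w0 T S' u) (\<omega> (traj gradl eta R w0 T S u) S)) z\<bar>) \<le> \<beta> * real J)"
    proof (intro exI[of _ "\<lambda>W w. closest_point W w"] conjI allI impI)
      fix S u w
      show "closest_point (traj gradl eta R w0 T S u) w \<in> traj gradl eta R w0 T S u"
        by (rule closest_point_in_set[OF finite_imp_closed[OF fin] ne])
    next
      fix z S S'
      assume lS: "length S = n" and lS': "length (S' :: 'z list) = n" and nd: "ndiff S S' = J"
      define dl where "dl = (\<lambda>u k. norm (psgd gradl eta R w0 S u k - psgd gradl eta R w0 S' u k))"
      have cardD: "card {j. j < n \<and> S ! j \<noteq> S' ! j} = J" using nd lS unfolding ndiff_def by simp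
      have pw: "\<bar>l (\<omega> (traj gradl eta R w0 T S u) S) z - l (closest_point (traj gradl eta R w0 T S' u) (\<omega> (traj gradl eta R w0 T S u) S)) z\<bar>
                \<le> L * (\<Sum>k\<in>{1..T}. dl u k)" if u: "u \<in> idx_space n T" for u
      proof -
        define v where "v = \<omega> (traj gradl eta R w0 T S u) S"
        have "v \<in> traj gradl eta R w0 T S u" unfolding v_def using h\<omega> lS u by blast
        then obtain k where k: "k \<in> {1..T}" and vk: "v = psgd gradl eta R w0 S u k" unfolding traj_def by auto
        have mem: "psgd gradl eta R w0 S' u k \<in> traj gradl eta R w0 T S' u" unfolding traj_def using k by auto
        have "\<bar>l v z - l (closest_point (traj gradl eta R w0 T S' u) v) z\<bar> \<le> L * norm (v - closest_point (traj gradl eta R w0 T S' u) v)"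
          by (rule lip)
        also have "norm (v - closest_point (traj gradl eta R w0 T S' u) v) = dist v (closest_point (traj gradl eta R w0 T S' u) v)"
          by (simp add: dist_norm)
        also have "\<dots> \<le> dist v (psgd gradl eta R w0 S' u k)"
          by (rule closest_point_le[OF finite_imp_closed[OF fin] mem])
        also have "\<dots> = dl u k" unfolding dl_def vk by (simp add: dist_norm)
        also have "\<dots> \<le> (\<Sum>k\<in>{1..T}. dl u k)"
          using k by (intro member_le_sum) (auto simp: dl_def)
        finally show ?thesis unfolding v_def using L0 by (simp add: mult_left_mono)
      qed
      have "expect_U n T (\<lambda>u. \<bar>l (\<omega> (traj gradl eta R w0 T S u) S) z - l ((\<lambda>W w. closest_point W w) (traj gradl eta R w0 T S' u) (\<omega> (traj gradl eta R w0 T S u) S)) z\<bar>)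
            \<le> expect_U n T (\<lambda>u. L * (\<Sum>k\<in>{1..T}. dl u k))"
        by (rule E_mono) (use pw in simp)
      also have "\<dots> = L * (\<Sum>k\<in>{1..T}. expect_U n T (\<lambda>u. dl u k))"
        by (simp add: E_cmult E_sum)
      also have "\<dots> \<le> L * (\<Sum>k\<in>{1..T}. 4 * R * (real J / real n) * (x powr (1 / (q + 1)) * real k powr (q / (q + 1))))"
      proof (intro mult_left_mono sum_mono L0)
        fix k assume k: "k \<in> {1..T}"
        show "expect_U n T (\<lambda>u. dl u k) \<le> 4 * R * (real J / real n) * (x powr (1 / (q + 1)) * real k powr (q / (q + 1)))"
          using final_k[OF glip gbound G_pos R_pos q_pos eta_nonneg eta_q n_pos, where k=k and T=T and S=S and S'=S'] k q1 cardD
          unfolding dl_def x_def by auto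
      qed
      also have "\<dots> = (4 * L * R * (real J / real n)) * x powr (1 / (q + 1)) * (\<Sum>k\<in>{1..T}. real k powr (q / (q + 1)))"
      proof -
        define C where "C = 4 * R * (real J / real n)"
        define X where "X = x powr (1 / (q + 1))"
        have "(\<Sum>k\<in>{1..T}. C * (X * real k powr (q / (q + 1)))) = C * X * (\<Sum>k\<in>{1..T}. real k powr (q / (q + 1)))"
          by (simp add: sum_distrib_left mult.assoc)
        then show ?thesis unfolding C_def X_def by (simp add: mult.assoc)
      qed
      also have "\<dots> \<le> (4 * L * R * (real J / (real n - 1))) * x powr (1 / (q + 1)) * (\<Sum>k\<in>{1..T}. real k powr (q / (q + 1)))"
      proof -
        have "real J / real n \<le> real J / (real n - 1)" using n_ge by (intro divide_left_mono) auto
        then show ?thesis using L0 R_pos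
          by (intro mult_right_mono mult_left_mono sum_nonneg) auto
      qed
      also have "\<dots> = \<beta> * real J" unfolding \<beta>_def by (simp add: field_simps)
      finally show "expect_U n T (\<lambda>u. \<bar>l (\<omega> (traj gradl eta R w0 T S u) S) z - l ((\<lambda>W w. closest_point W w) (traj gradl eta R w0 T S' u) (\<omega> (traj gradl eta R w0 T S u) S)) z\<bar>) \<le> \<beta> * real J" .
    qed
  qed
  then show ?thesis unfolding \<beta>_def x_def q_def .
qed

end
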